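(* Let $f_1,f_2,m$ be integers such that $f(x)=f_1x+f_2x^2 \bmod N$ is a permutation of $\mathbb{Z}_N$. Let $\alpha=\mathrm{lcm}(\lambda,\rho)$ and $f'(x)=(f_1+2m\alpha f_2)x+f_2x^2 \bmod N$. Then $f'$ is a permutation of $\mathbb{Z}_N$, and the graphs $G_f$ and $G_{f'}$ are isomorphic.
   Context: Fix positive integers $\lambda,\rho$ and a positive integer $N$ divisible by both $\lambda$ and $\rho$. Put $n=N/\lambda$ and $r=N/\rho$, and identify $\mathbb{Z}_N$ with $\{0,1,\dots,N-1\}$. For a permutation $f$ of $\mathbb{Z}_N$, define the bipartite multigraph $G_f$ as follows: - it has variable nodes $v_0,\dots,v_{n-1}$ and check nodes $c_0,\dots,c_{r-1}$; - it has $N$ edges $e_0,\dots,e_{N-1}$, where edge $e_i$ (left-label $i$, right-label $f(i)$) joins $v_{\lfloor i/\lambda\rfloor}$ and $c_{\lfloor f(i)/\rho\rfloor}$. An isomorphism of such graphs is a bijection that maps variable nodes to variable nodes and check nodes to check nodes and preserves the number of edges between every pair of nodes. *)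

theory Defs
  imports Main
begin

definition is_perm_ZN :: "nat \<Rightarrow> (nat \<Rightarrow> nat) \<Rightarrow> bool" where
  "is_perm_ZN N f \<longleftrightarrow> bij_betw f {..<N} {..<N}"

definition qpoly :: "nat \<Rightarrow> int \<Rightarrow> int \<Rightarrow> nat \<Rightarrow> nat" where
  "qpoly N f1 f2 x = nat ((f1 * int x + f2 * (int x)^2) mod int N)"

text \<open>The multigraph G_f: variable nodes v_0..v_{n-1} (n = N div lambda), check nodes
  c_0..c_{r-1} (r = N div rho); edge e_i joins v_{i div lambda} and c_{f i div rho}.
  It is represented by its edge multiplicity function.\<close>

definition edge_mult :: "nat \<Rightarrow> nat \<Rightarrow> nat \<Rightarrow> (nat \<Rightarrow> nat) \<Rightarrow> nat \<Rightarrow> nat \<Rightarrow> nat" where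
  "edge_mult N lam rho f v c = card {i. i < N \<and> i div lam = v \<and> f i div rho = c}"

definition graph_iso :: "nat \<Rightarrow> nat \<Rightarrow> nat \<Rightarrow> (nat \<Rightarrow> nat) \<Rightarrow> (nat \<Rightarrow> nat) \<Rightarrow> bool" where
  "graph_iso N lam rho f g \<longleftrightarrow>
     (\<exists>\<sigma> \<tau>. bij_betw \<sigma> {..<N div lam} {..<N div lam} \<and>
            bij_betw \<tau> {..<N div rho} {..<N div rho} \<and>
            (\<forall>v < N div lam. \<forall>c < N div rho.
               edge_mult N lam rho f v c = edge_mult N lam rho g (\<sigma> v) (\<tau> c)))"

end

theory Submission
  imports Defs
begin

lemma keyL:
  fixes d n :: nat and x A :: int
  assumes "d > 0"
  shows "((x + int d * A) mod (int d * int n)) div int d = (x div int d + A) mod int n"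
proof -
  have "(x + int d * A) mod (int d * int n) = int d * ((x + int d * A) div int d mod int n) + (x + int d * A) mod int d"
    by (rule mod_mult2_eq')
  also have "(x + int d * A) div int d = x div int d + A" using assms by simp
  also have "(x + int d * A) mod int d = x mod int d" by simp
  finally have e: "(x + int d * A) mod (int d * int n) = int d * ((x div int d + A) mod int n) + x mod int d" .
  show ?thesis unfolding e using assms by simp
qed

lemma shift_bij:
  fixes n :: nat and s :: int
  assumes "n > 0"
  shows "bij_betw (\<lambda>i. nat ((int i + s) mod int n)) {..<n} {..<n}"
proof (rule bij_betw_byWitness[where f'="\<lambda>i. nat ((int i - s) mod int n)"])
  show "\<forall>a\<in>{..<n}. nat ((int (nat ((int a + s) mod int n)) - s) mod int n) = a"
  proof
    fix a assume a: "a \<in> {..<n}"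
    have "int (nat ((int a + s) mod int n)) = (int a + s) mod int n" using assms by simp
    then have "(int (nat ((int a + s) mod int n)) - s) mod int n = ((int a + s) - s) mod int n"
      by (simp add: mod_diff_left_eq)
    also have "\<dots> = int a" using a by simp
    finally show "nat ((int (nat ((int a + s) mod int n)) - s) mod int n) = a" by simp
  qed
  show "\<forall>a\<in>{..<n}. nat ((int (nat ((int a - s) mod int n)) + s) mod int n) = a"
  proof
    fix a assume a: "a \<in> {..<n}"
    have "int (nat ((int a - s) mod int n)) = (int a - s) mod int n" using assms by simp
    then have "(int (nat ((int a - s) mod int n)) + s) mod int n = ((int a - s) + s) mod int n"
      by (simp add: mod_add_left_eq)
    also have "\<dots> = int a" using a by simp
    finally show "nat ((int (nat ((int a - s) mod int n)) + s) mod int n) = a" by simp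
  qed
  show "(\<lambda>i. nat ((int i + s) mod int n)) ` {..<n} \<subseteq> {..<n}"
    using assms by (auto simp: nat_less_iff)
  show "(\<lambda>i. nat ((int i - s) mod int n)) ` {..<n} \<subseteq> {..<n}"
    using assms by (auto simp: nat_less_iff)
qed

lemma poly_mod:
  fixes f1 f2 x a :: int
  shows "((f1 * ((x + a) mod N) + f2 * ((x + a) mod N)^2) mod N - (f1 * a + f2 * a^2) mod N) mod N
       = ((f1 + 2 * a * f2) * x + f2 * x^2) mod N"
proof -
  have "((f1 * ((x + a) mod N) + f2 * ((x + a) mod N)^2) mod N - (f1 * a + f2 * a^2) mod N) mod N
      = ((f1 * ((x + a) mod N) + f2 * ((x + a) mod N)^2) - (f1 * a + f2 * a^2)) mod N"
    by (simp add: mod_diff_eq)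
  also have "\<dots> = ((f1 * (x + a) + f2 * (x + a)^2) - (f1 * a + f2 * a^2)) mod N"
    by (metis (no_types, lifting) mod_add_cong mod_diff_left_eq mod_mult_right_eq power_mod)
  also have "(f1 * (x + a) + f2 * (x + a)^2) - (f1 * a + f2 * a^2) = (f1 + 2 * a * f2) * x + f2 * x^2"
    by (simp add: power2_eq_square algebra_simps)
  finally show ?thesis .
qed

lemma shiftM:
  fixes q v A n :: int
  assumes "0 \<le> q" "q < n" "0 \<le> v" "v < n"
  shows "((q + A) mod n = v) \<longleftrightarrow> (q = (v + - A) mod n)"
proof
  assume "(q + A) mod n = v"
  then have "(v + - A) mod n = ((q + A) + - A) mod n" by (metis mod_add_left_eq)
  then show "q = (v + - A) mod n" using assms by simp
next
  assume "q = (v + - A) mod n"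
  then have "(q + A) mod n = ((v + - A) + A) mod n" by (metis mod_add_left_eq)
  then show "(q + A) mod n = v" using assms by simp
qed

lemma shiftM2:
  fixes y c s n :: int
  assumes "0 \<le> y" "y < n" "0 \<le> c" "c < n"
  shows "((y + s) mod n = (c + s) mod n) \<longleftrightarrow> y = c"
proof
  assume "(y + s) mod n = (c + s) mod n"
  then have "((y + s) + - s) mod n = ((c + s) + - s) mod n" by (metis mod_add_left_eq)
  then show "y = c" using assms by simp
qed simp

theorem proposition3:
  fixes lam rho N :: nat and f1 f2 m :: int
  assumes "lam > 0" and "rho > 0" and "N > 0"
    and "lam dvd N" and "rho dvd N"
    and "is_perm_ZN N (qpoly N f1 f2)"
  shows "is_perm_ZN N (qpoly N (f1 + 2 * m * int (lcm lam rho) * f2) f2)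
         \<and> graph_iso N lam rho (qpoly N f1 f2) (qpoly N (f1 + 2 * m * int (lcm lam rho) * f2) f2)"
proof -
  note lp = assms(1) and rp = assms(2) and Np = assms(3)
  define f where "f = qpoly N f1 f2"
  define g where "g = qpoly N (f1 + 2 * m * int (lcm lam rho) * f2) f2"
  define n where "n = N div lam"
  define r where "r = N div rho"
  have Nn: "N = lam * n" using assms(4) n_def by simp
  have Nr: "N = rho * r" using assms(5) r_def by simp
  have np: "n > 0" using Nn Np by (cases n) auto
  have rpos: "r > 0" using Nr Np by (cases r) auto
  define a where "a = m * int (lcm lam rho)"
  have lam_a: "int lam dvd a" unfolding a_def by (simp add: int_dvd_int_iff)
  have rho_a: "int rho dvd a" unfolding a_def by (simp add: int_dvd_int_iff)
  define A where "A = a div int lam"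
  have aA: "a = int lam * A" using lam_a A_def by simp
  define b where "b = (f1 * a + f2 * a^2) mod int N"
  have rho_b: "int rho dvd b"
  proof -
    have "int rho dvd f1 * a + f2 * a^2" using rho_a by (simp add: power2_eq_square)
    moreover have "int rho dvd int N" using assms(5) by simp
    ultimately show ?thesis unfolding b_def by (simp add: dvd_mod)
  qed
  define B where "B = b div int rho"
  have bB: "b = int rho * B" using rho_b B_def by simp
  define \<phi> where "\<phi> = (\<lambda>i. nat ((int i + a) mod int N))"
  define \<psi> where "\<psi> = (\<lambda>i. nat ((int i + - b) mod int N))"
  define \<sigma> where "\<sigma> = (\<lambda>i. nat ((int i + - A) mod int n))"
  define \<tau> where "\<tau> = (\<lambda>i. nat ((int i + - B) mod int r))"
  have bphi: "bij_betw \<phi> {..<N} {..<N}" unfolding \<phi>_def by (rule shift_bij[OF Np])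
  have bpsi: "bij_betw \<psi> {..<N} {..<N}" unfolding \<psi>_def by (rule shift_bij[OF Np])
  have bsig: "bij_betw \<sigma> {..<n} {..<n}" unfolding \<sigma>_def by (rule shift_bij[OF np])
  have btau: "bij_betw \<tau> {..<r} {..<r}" unfolding \<tau>_def by (rule shift_bij[OF rpos])
  have bf: "bij_betw f {..<N} {..<N}" using assms(6) unfolding f_def is_perm_ZN_def .
  have comp: "g i = \<psi> (f (\<phi> i))" if "i < N" for i
  proof -
    have "int (\<phi> i) = (int i + a) mod int N" unfolding \<phi>_def using Np by simp
    then have "int (f (\<phi> i)) = (f1 * ((int i + a) mod int N) + f2 * ((int i + a) mod int N)^2) mod int N"
      unfolding f_def qpoly_def using Np by simp
    then have "\<psi> (f (\<phi> i)) = nat (((f1 * ((int i + a) mod int N) + f2 * ((int i + a) mod int N)^2) mod int N - b) mod int N)"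
      unfolding \<psi>_def by simp
    also have "\<dots> = nat (((f1 + 2 * a * f2) * int i + f2 * (int i)^2) mod int N)"
      unfolding b_def by (simp only: poly_mod)
    also have "\<dots> = g i" unfolding g_def qpoly_def a_def by (simp add: algebra_simps)
    finally show ?thesis by simp
  qed
  have bg: "bij_betw g {..<N} {..<N}"
  proof -
    have "bij_betw (\<psi> \<circ> (f \<circ> \<phi>)) {..<N} {..<N}"
      by (rule bij_betw_trans[OF bij_betw_trans[OF bphi bf] bpsi])
    moreover have "\<And>i. i \<in> {..<N} \<Longrightarrow> (\<psi> \<circ> (f \<circ> \<phi>)) i = g i" using comp by simp
    ultimately show ?thesis using bij_betw_cong by blast
  qed
  have blockL: "(i div lam = \<sigma> v) \<longleftrightarrow> (\<phi> i div lam = v)" if "i < N" "v < n" for i v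
  proof -
    have "int (\<phi> i div lam) = int (\<phi> i) div int lam" by (simp add: zdiv_int)
    also have "int (\<phi> i) = (int i + int lam * A) mod (int lam * int n)"
      unfolding \<phi>_def using Np aA Nn by simp
    also have "\<dots> div int lam = (int i div int lam + A) mod int n" by (rule keyL[OF lp])
    finally have e: "int (\<phi> i div lam) = (int (i div lam) + A) mod int n" by (simp add: zdiv_int)
    have qn: "i div lam < n" using that Nn lp by (simp add: less_mult_imp_div_less mult.commute)
    have "(\<phi> i div lam = v) \<longleftrightarrow> ((int (i div lam) + A) mod int n = int v)" using e by linarith
    also have "\<dots> \<longleftrightarrow> (int (i div lam) = (int v + - A) mod int n)"
      by (rule shiftM) (use qn that in auto)
    also have "\<dots> \<longleftrightarrow> (i div lam = \<sigma> v)" unfolding \<sigma>_def using np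
      by (metis int_nat_eq nat_int pos_mod_sign of_nat_0_less_iff)
    finally show ?thesis by simp
  qed
  have blockR: "(\<psi> y div rho = \<tau> c) \<longleftrightarrow> (y div rho = c)" if "y < N" "c < r" for y c
  proof -
    have "int (\<psi> y div rho) = int (\<psi> y) div int rho" by (simp add: zdiv_int)
    also have "int (\<psi> y) = (int y + int rho * (- B)) mod (int rho * int r)"
      unfolding \<psi>_def using Np bB Nr by simp
    also have "\<dots> div int rho = (int y div int rho + - B) mod int r" by (rule keyL[OF rp])
    finally have e: "int (\<psi> y div rho) = (int (y div rho) + - B) mod int r" by (simp add: zdiv_int)
    have qn: "y div rho < r" using that Nr rp by (simp add: less_mult_imp_div_less mult.commute)
    have t: "int (\<tau> c) = (int c + - B) mod int r" unfolding \<tau>_def using rpos by simp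
    have "(\<psi> y div rho = \<tau> c) \<longleftrightarrow> ((int (y div rho) + - B) mod int r = (int c + - B) mod int r)"
      using e t by (metis of_nat_eq_iff)
    also have "\<dots> \<longleftrightarrow> int (y div rho) = int c"
      by (rule shiftM2) (use qn that in auto)
    finally show ?thesis by simp
  qed
  have em: "edge_mult N lam rho f v c = edge_mult N lam rho g (\<sigma> v) (\<tau> c)"
    if v: "v < n" and c: "c < r" for v c
  proof -
    define S where "S = {i. i < N \<and> i div lam = v \<and> f i div rho = c}"
    define S' where "S' = {i. i < N \<and> i div lam = \<sigma> v \<and> g i div rho = \<tau> c}"
    have injS': "inj_on \<phi> S'"
      using bij_betw_imp_inj_on[OF bphi] unfolding S'_def by (rule inj_on_subset) auto
    have fN: "f j < N" if "j < N" for j using bf that by (auto dest: bij_betw_apply)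
    have phiN: "\<phi> i < N" if "i < N" for i using bphi that by (auto dest: bij_betw_apply)
    have mem: "i \<in> S' \<longleftrightarrow> \<phi> i \<in> S" if "i < N" for i
      unfolding S_def S'_def using that comp blockL[OF that v] blockR[OF fN[OF phiN[OF that]] c] phiN
      by auto
    have "\<phi> ` S' = S"
    proof
      show "\<phi> ` S' \<subseteq> S" using mem unfolding S'_def by auto
      show "S \<subseteq> \<phi> ` S'"
      proof
        fix j assume j: "j \<in> S"
        then have "j \<in> \<phi> ` {..<N}" using bij_betw_imp_surj_on[OF bphi] unfolding S_def by auto
        then obtain i where i: "i < N" "j = \<phi> i" by auto
        then have "i \<in> S'" using mem j by simp
        then show "j \<in> \<phi> ` S'" using i by auto
      qed
    qed
    then have "card S = card S'" using card_image[OF injS'] by simp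
    then show ?thesis unfolding edge_mult_def S_def S'_def by simp
  qed
  have "graph_iso N lam rho f g"
    unfolding graph_iso_def using bsig btau em n_def r_def by blast
  then show ?thesis using bg unfolding is_perm_ZN_def f_def g_def by simp
qed

end
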